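(* Under Assumptions A1 and A2, for every compact set $B\subset(0,\infty)^2$, $$\lim_{t\to\infty}\sup_{(x,y)\in B}\Big|\frac{\widehat C_v\big(\overline F(xt),\overline F(yt)\big)}{\big(\overline F(t)\big)^{\kappa-1}\ell\big(\overline F(t)\big)}-\tau_v\big(x^{-\alpha},y^{-\alpha}\big)\Big|=0.$$
   Context: $\mathrm{RV}_\gamma$: $f(tx)/f(t)\to x^\gamma$ as $t\to\infty$; slowly varying at $0$: $\ell(st)/\ell(t)\to1$ as $t\downarrow0$. Assumption A1: $X,Y$ nonnegative continuous random variables with common distribution function $F$, $\overline F=1-F\in\mathrm{RV}_{-\alpha}$, $\alpha>0$. The survival copula $\widehat C$ satisfies $\Pr(X>x,Y>y)=\widehat C(\overline F(x),\overline F(y))$; $\widehat C_u,\widehat C_v$ its partial derivatives, $\tau_v=\partial\tau/\partial v$. Assumption A2: $\widehat C$ symmetric, twice differentiable on $[0,1]^2$; there exist $\kappa\in[1,2]$, $\ell$ slowly varying at $0$, $\tau\not\equiv0$ continuously differentiable on $[0,\infty)^2$ with $\lim_{t\downarrow0}\widehat C(ut,vt)/(t^\kappa\ell(t))=\tau(u,v)$ for all $u,v\ge0$; $\widehat C_u(u,v)$ nonincreasing in $u$, $\widehat C_v(u,v)$ nonincreasing in $v$. *)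

theory Defs
  imports "HOL-Probability.Probability"
begin

definition regularly_varying :: "(real \<Rightarrow> real) \<Rightarrow> real \<Rightarrow> bool" where
  "regularly_varying f \<gamma> \<longleftrightarrow>
     (\<forall>x>0. ((\<lambda>t. f (t * x) / f t) \<longlongrightarrow> x powr \<gamma>) at_top)"

definition slowly_varying_at_0 :: "(real \<Rightarrow> real) \<Rightarrow> bool" where
  "slowly_varying_at_0 l \<longleftrightarrow>
     (\<forall>t>0. l t > 0) \<and> l \<in> borel_measurable borel \<and>
     (\<forall>s>0. ((\<lambda>t. l (s * t) / l t) \<longlongrightarrow> 1) (at_right 0))"

definition copula :: "(real \<Rightarrow> real \<Rightarrow> real) \<Rightarrow> bool" where
  "copula C \<longleftrightarrow>
     (\<forall>u\<in>{0..1}. \<forall>v\<in>{0..1}. C u v \<in> {0..1}) \<and>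
     (\<forall>u\<in>{0..1}. C u 0 = 0 \<and> C 0 u = 0 \<and> C u 1 = u \<and> C 1 u = u) \<and>
     (\<forall>u1\<in>{0..1}. \<forall>u2\<in>{0..1}. \<forall>v1\<in>{0..1}. \<forall>v2\<in>{0..1}.
        u1 \<le> u2 \<longrightarrow> v1 \<le> v2 \<longrightarrow> C u2 v2 - C u2 v1 - C u1 v2 + C u1 v1 \<ge> 0)"

text \<open>g has partial derivatives gu, gv on S (as a function of the pair), i.e. is
  (Frechet) differentiable within S with gradient (gu, gv).\<close>
definition has_partials_on ::
  "(real \<Rightarrow> real \<Rightarrow> real) \<Rightarrow> (real \<Rightarrow> real \<Rightarrow> real) \<Rightarrow> (real \<Rightarrow> real \<Rightarrow> real)
     \<Rightarrow> (real \<times> real) set \<Rightarrow> bool" where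
  "has_partials_on g gu gv S \<longleftrightarrow>
     (\<forall>(u,v)\<in>S. ((\<lambda>p. g (fst p) (snd p)) has_derivative
        (\<lambda>h. gu u v * fst h + gv u v * snd h)) (at (u,v) within S))"

end

theory Submission
  imports Defs
begin

lemma partial2_at:
  assumes H: "has_partials_on g gu gv S" and uv: "(u,v) \<in> S"
    and T: "open T" "v \<in> T" "\<And>w. w \<in> T \<Longrightarrow> (u,w) \<in> S"
  shows "((\<lambda>w. g u w) has_real_derivative gv u v) (at v)"
proof -
  have d: "((\<lambda>p. g (fst p) (snd p)) has_derivative (\<lambda>h. gu u v * fst h + gv u v * snd h)) (at (u,v) within S)"
    using H uv unfolding has_partials_on_def by auto
  have p: "((\<lambda>w. (u,w)) has_derivative (\<lambda>h. (0,h))) (at v within T)"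
    by (auto intro!: derivative_eq_intros)
  have sub: "(\<lambda>w. (u,w)) ` T \<subseteq> S" using T by auto
  have d2: "((\<lambda>p. g (fst p) (snd p)) has_derivative (\<lambda>h. gu u v * fst h + gv u v * snd h)) (at ((\<lambda>w. (u,w)) v) within ((\<lambda>w. (u,w)) ` T))"
    using has_derivative_subset[OF d sub] by simp
  have "(((\<lambda>p. g (fst p) (snd p)) \<circ> (\<lambda>w. (u,w))) has_derivative ((\<lambda>h. gu u v * fst h + gv u v * snd h) \<circ> (\<lambda>h. (0,h)))) (at v within T)"
    by (rule diff_chain_within[OF p d2])
  hence "((\<lambda>w. g u w) has_derivative (\<lambda>h. gv u v * h)) (at v within T)"
    by (simp add: comp_def)
  hence "((\<lambda>w. g u w) has_derivative (\<lambda>h. gv u v * h)) (at v)"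
    using at_within_open_subset[of v T T] T by simp
  moreover have "(\<lambda>h. gv u v * h) = (*) (gv u v)" by auto
  ultimately show ?thesis unfolding has_field_derivative_def by simp
qed

lemma Cv_mono_u:
  assumes cop: "copula C" and CD: "has_partials_on C Cu Cv ({0..1}\<times>{0..1})"
    and u: "0 < u1" "u1 \<le> u2" "u2 < 1" and v: "0 < v" "v < 1"
  shows "Cv u1 v \<le> Cv u2 v"
proof (rule ccontr)
  assume neg: "\<not> ?thesis"
  have d1: "((\<lambda>w. C u1 w) has_real_derivative Cv u1 v) (at v)"
    by (rule partial2_at[OF CD, of u1 v "{0<..<1}"]) (use u v in auto)
  have d2: "((\<lambda>w. C u2 w) has_real_derivative Cv u2 v) (at v)"
    by (rule partial2_at[OF CD, of u2 v "{0<..<1}"]) (use u v in auto)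
  have der: "((\<lambda>w. C u2 w - C u1 w) has_real_derivative Cv u2 v - Cv u1 v) (at v)"
    using DERIV_diff[OF d2 d1] .
  have lt0: "Cv u2 v - Cv u1 v < 0" using neg by linarith
  obtain d where d0: "d > 0" and dd: "\<forall>h>0. h < d \<longrightarrow> (\<lambda>w. C u2 w - C u1 w) v > (\<lambda>w. C u2 w - C u1 w) (v + h)"
    using DERIV_neg_dec_right[OF der lt0] by blast
  have d: "d > 0" "\<And>h. h > 0 \<Longrightarrow> h < d \<Longrightarrow> C u2 (v+h) - C u1 (v+h) < C u2 v - C u1 v"
    using d0 dd by auto
  define h where "h = min (d/2) ((1-v)/2)"
  have h1: "h \<le> (1-v)/2" "h \<le> d/2" unfolding h_def by (rule min.cobounded2, rule min.cobounded1)
  have h0: "h > 0" using d v by (simp add: h_def)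
  have h: "h > 0" "h < d" "v + h \<le> 1" 
    using h0 apply simp
    using h1(2) d(1) apply linarith
    using h1(1) \<open>v < 1\<close> h0 by argo
  have inc: "\<forall>u1\<in>{0..1}. \<forall>u2\<in>{0..1}. \<forall>v1\<in>{0..1}. \<forall>v2\<in>{0..1}.
        u1 \<le> u2 \<longrightarrow> v1 \<le> v2 \<longrightarrow> C u2 v2 - C u2 v1 - C u1 v2 + C u1 v1 \<ge> 0"
    using cop unfolding copula_def by blast
  have "C u2 (v+h) - C u2 v - C u1 (v+h) + C u1 v \<ge> 0"
    using inc[rule_format, of u1 u2 v "v+h"] u v h by auto
  thus False using d(2)[OF h(1,2)] by linarith
qed

lemma sandwich:
  assumes CD: "has_partials_on C Cu Cv ({0..1}\<times>{0..1})"
    and Cv_mono: "\<And>u. u \<in> {0..1} \<Longrightarrow> antimono_on {0..1} (\<lambda>v. Cv u v)"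
    and s: "s > 0" and a: "a > 0" "a * s < 1" and b: "b > 0" and h: "h > 0" "(b+h) * s < 1"
    and l: "l s > 0"
  shows "Cv (a * s) ((b+h) * s) / (s powr (k-1) * l s)
          \<le> (C (a * s) ((b+h) * s)/(s powr k * l s) - C (a * s) (b * s)/(s powr k * l s))/h"
    and "(C (a * s) ((b+h) * s)/(s powr k * l s) - C (a * s) (b * s)/(s powr k * l s))/h
          \<le> Cv (a * s) (b * s) / (s powr (k-1) * l s)"
proof -
  have lt: "b * s < (b+h) * s" using s h by (simp add: mult_strict_right_mono)
  have "\<exists>z. b * s < z \<and> z < (b+h) * s \<and> C (a * s) ((b+h) * s) - C (a * s) (b * s) = ((b+h) * s - b * s) * Cv (a * s) z"
  proof (rule MVT2[OF lt])
    fix x assume x: "b * s \<le> x" "x \<le> (b+h) * s"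
    have "0 < x" using x b s by (metis less_le_trans mult_pos_pos)
    moreover have "x < 1" using x h by linarith
    ultimately show "((\<lambda>w. C (a * s) w) has_real_derivative Cv (a * s) x) (at x)"
      by (intro partial2_at[OF CD, of "a * s" x "{0<..<1}"]) (use a s in auto)
  qed
  then obtain z where z: "b * s < z" "z < (b+h) * s" "C (a * s) ((b+h) * s) - C (a * s) (b * s) = (h * s) * Cv (a * s) z"
    by (auto simp: algebra_simps)
  have pk: "s powr k = s * s powr (k-1)"
  proof -
    have "s powr k = s powr (1 + (k-1))" by simp
    also have "\<dots> = s powr 1 * s powr (k-1)" by (rule powr_add)
    also have "\<dots> = s * s powr (k-1)" using s by simp
    finally show ?thesis .
  qed
  have den: "s powr (k-1) * l s > 0" using s l by simp
  have mid: "(C (a * s) ((b+h) * s)/(s powr k * l s) - C (a * s) (b * s)/(s powr k * l s))/h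
        = Cv (a * s) z / (s powr (k-1) * l s)"
  proof -
    have "(C (a * s) ((b+h) * s)/(s powr k * l s) - C (a * s) (b * s)/(s powr k * l s))/h
        = (C (a * s) ((b+h) * s) - C (a * s) (b * s)) / (s powr k * l s) / h"
      by (simp add: diff_divide_distrib)
    also have "\<dots> = (h * s) * Cv (a * s) z / (s * (s powr (k-1) * l s)) / h"
      using z(3) pk by (simp add: mult.assoc)
    also have "\<dots> = Cv (a * s) z / (s powr (k-1) * l s)"
      using s h by (simp add: field_simps)
    finally show ?thesis .
  qed
  have as01: "a * s \<in> {0..1}" using a s by auto
  have z0: "b * s \<ge> 0" using b s by simp
  have "Cv (a * s) ((b+h) * s) \<le> Cv (a * s) z"
    using monotone_onD[OF Cv_mono[OF as01], of z "(b+h) * s"] z z0 h by auto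
  thus "Cv (a * s) ((b+h) * s) / (s powr (k-1) * l s)
          \<le> (C (a * s) ((b+h) * s)/(s powr k * l s) - C (a * s) (b * s)/(s powr k * l s))/h"
    unfolding mid using den by (simp add: divide_right_mono)
  have "Cv (a * s) z \<le> Cv (a * s) (b * s)"
    using monotone_onD[OF Cv_mono[OF as01], of "b * s" z] z z0 h by auto
  thus "(C (a * s) ((b+h) * s)/(s powr k * l s) - C (a * s) (b * s)/(s powr k * l s))/h
          \<le> Cv (a * s) (b * s) / (s powr (k-1) * l s)"
    unfolding mid using den by (simp add: divide_right_mono)
qed

lemma tau_mvt:
  assumes TD: "has_partials_on \<tau> \<tau>u \<tau>v ({0..}\<times>{0..})"
    and a: "a \<ge> 0" and b: "b > 0" and h: "h > 0"
  shows "\<exists>z. b < z \<and> z < b + h \<and> (\<tau> a (b+h) - \<tau> a b)/h = \<tau>v a z"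
proof -
  have lt: "b < b + h" using h by simp
  have "\<exists>z. b < z \<and> z < b+h \<and> \<tau> a (b+h) - \<tau> a b = (b+h - b) * \<tau>v a z"
  proof (rule MVT2[OF lt])
    fix x assume x: "b \<le> x" "x \<le> b+h"
    show "((\<lambda>w. \<tau> a w) has_real_derivative \<tau>v a x) (at x)"
      by (intro partial2_at[OF TD, of a x "{0<..}"]) (use a b x in auto)
  qed
  thus ?thesis using h by auto
qed

lemma F_facts:
  fixes M :: "'a measure" and X :: "'a \<Rightarrow> real" and F :: "real \<Rightarrow> real"
  assumes M: "prob_space M" and X_rv: "X \<in> borel_measurable M"
    and X_cdf: "\<And>x. measure M {\<omega>\<in>space M. X \<omega> \<le> x} = F x"
    and F_RV: "regularly_varying (\<lambda>x. 1 - F x) (- \<alpha>)"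
  shows "\<And>x y. x \<le> y \<Longrightarrow> 1 - F y \<le> 1 - F x"
    and "\<And>t. 1 - F t > 0"
    and "((\<lambda>t. 1 - F t) \<longlongrightarrow> 0) at_top"
proof -
  interpret P: prob_space M by (rule M)
  have meas: "\<And>x. {\<omega>\<in>space M. X \<omega> \<le> x} \<in> sets M" using X_rv by measurable
  show mono: "\<And>x y. x \<le> y \<Longrightarrow> 1 - F y \<le> 1 - F x"
  proof -
    fix x y :: real assume "x \<le> y"
    hence "{\<omega>\<in>space M. X \<omega> \<le> x} \<subseteq> {\<omega>\<in>space M. X \<omega> \<le> y}" by auto
    hence "F x \<le> F y" using P.finite_measure_mono[OF _ meas[of y]] X_cdf by metis
    thus "1 - F y \<le> 1 - F x" by simp
  qed
  have le1: "\<And>x. F x \<le> 1" using X_cdf P.prob_le_1 by metis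
  have nn: "\<And>x. 1 - F x \<ge> 0" using le1 by simp
  show "\<And>t. 1 - F t > 0"
  proof (rule ccontr)
    fix t0 assume "\<not> 1 - F t0 > 0"
    hence z: "1 - F t0 = 0" using nn[of t0] by linarith
    have ev: "eventually (\<lambda>t. (1 - F (t * 2)) / (1 - F t) = 0) at_top"
    proof (rule eventually_mono[OF eventually_ge_at_top[of "max t0 0"]])
      fix t assume "max t0 0 \<le> t"
      hence "t0 \<le> t" by simp
      hence "1 - F t \<le> 0" using mono[of t0 t] z by simp
      hence "1 - F t = 0" using nn[of t] by linarith
      thus "(1 - F (t * 2)) / (1 - F t) = 0" by simp
    qed
    have "((\<lambda>t. (1 - F (t * 2)) / (1 - F t)) \<longlongrightarrow> 0) at_top"
      by (rule tendsto_eventually[OF ev])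
    moreover have "((\<lambda>t. (1 - F (t * 2)) / (1 - F t)) \<longlongrightarrow> 2 powr (-\<alpha>)) at_top"
      using F_RV unfolding regularly_varying_def by auto
    ultimately have "2 powr (-\<alpha>) = (0::real)"
      using tendsto_unique[OF trivial_limit_at_top_linorder] by metis
    thus False by simp
  qed
  define D where "D = distr M borel X"
  have RD: "real_distribution D" unfolding D_def using X_rv by simp
  have cdfD: "cdf D = F"
  proof
    fix x
    have "cdf D x = measure D {..x}" by (simp add: cdf_def)
    also have "\<dots> = measure M (X -` {..x} \<inter> space M)"
      unfolding D_def using X_rv by (simp add: measure_distr)
    also have "X -` {..x} \<inter> space M = {\<omega>\<in>space M. X \<omega> \<le> x}" by auto
    finally show "cdf D x = F x" using X_cdf by simp
  qed
  have "(F \<longlongrightarrow> 1) at_top"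
    using real_distribution.cdf_lim_at_top_prob[OF RD] cdfD by simp
  hence "((\<lambda>t. 1 - F t) \<longlongrightarrow> 1 - 1) at_top" by (intro tendsto_intros)
  thus "((\<lambda>t. 1 - F t) \<longlongrightarrow> 0) at_top" by simp
qed

lemma local_bound:
  fixes C Cu Cv \<tau> \<tau>u \<tau>v :: "real \<Rightarrow> real \<Rightarrow> real" and f l :: "real \<Rightarrow> real"
  assumes cop: "copula C"
    and CD: "has_partials_on C Cu Cv ({0..1}\<times>{0..1})"
    and Cv_mono: "\<And>u. u \<in> {0..1} \<Longrightarrow> antimono_on {0..1} (\<lambda>v. Cv u v)"
    and TD: "has_partials_on \<tau> \<tau>u \<tau>v ({0..}\<times>{0..})"
    and tv_cont: "continuous_on ({0..}\<times>{0..}) (\<lambda>p. \<tau>v (fst p) (snd p))"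
    and C_tail: "\<And>u v. u \<ge> 0 \<Longrightarrow> v \<ge> 0 \<Longrightarrow>
        ((\<lambda>t. C (u * t) (v * t) / (t powr \<kappa> * l t)) \<longlongrightarrow> \<tau> u v) (at_right 0)"
    and lpos: "\<And>t. t > 0 \<Longrightarrow> l t > 0"
    and fanti: "\<And>x y. x \<le> y \<Longrightarrow> f y \<le> f x"
    and fpos: "\<And>t. f t > 0"
    and flim: "(f \<longlongrightarrow> 0) at_top"
    and fRV: "\<And>x. x > 0 \<Longrightarrow> ((\<lambda>t. f (t * x) / f t) \<longlongrightarrow> x powr (-\<alpha>)) at_top"
    and x0: "x0 > 0" and y0: "y0 > 0" and eps: "\<epsilon> > 0"
  shows "\<exists>U. open U \<and> (x0,y0) \<in> U \<and> eventually (\<lambda>t. \<forall>x y. (x,y) \<in> U \<longrightarrow>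
      \<bar>Cv (f (x * t)) (f (y * t)) / (f t powr (\<kappa> - 1) * l (f t)) - \<tau>v (x powr (-\<alpha>)) (y powr (-\<alpha>))\<bar> < \<epsilon>) at_top"
proof -
  define q where "q = \<epsilon> / 4"
  have q: "q > 0" "\<epsilon> = 4 * q" using eps unfolding q_def by auto
  define a0 where "a0 = x0 powr (-\<alpha>)"
  define b0 where "b0 = y0 powr (-\<alpha>)"
  have a0: "a0 > 0" and b0: "b0 > 0" unfolding a0_def b0_def using x0 y0 by auto
  have "(a0,b0) \<in> {0..}\<times>{0..}" using a0 b0 by auto
  then obtain e0 where e0: "e0 > 0"
    "\<forall>p\<in>{0..}\<times>{0..}. dist p (a0,b0) < e0 \<longrightarrow> dist (\<tau>v (fst p) (snd p)) (\<tau>v (fst (a0,b0)) (snd (a0,b0))) < q"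
    using tv_cont q(1) unfolding continuous_on_iff by metis
  define c where "c = min (e0/2) (min a0 b0) / 6"
  have c: "c > 0" "12 * c \<le> e0" "6 * c \<le> a0" "6 * c \<le> b0"
    using e0 a0 b0 unfolding c_def by auto
  have tv_close: "\<bar>\<tau>v a b - \<tau>v a0 b0\<bar> < q"
    if "a \<ge> 0" "b \<ge> 0" "\<bar>a - a0\<bar> < 6 * c" "\<bar>b - b0\<bar> < 6 * c" for a b
  proof -
    have "dist (a,b) (a0,b0) = sqrt ((dist a a0)\<^sup>2 + (dist b b0)\<^sup>2)" by (rule dist_Pair_Pair)
    also have "\<dots> \<le> \<bar>dist a a0\<bar> + \<bar>dist b b0\<bar>" by (rule sqrt_sum_squares_le_sum_abs)
    also have "\<dots> < e0" using that c by (simp add: dist_real_def)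
    finally have "dist (a,b) (a0,b0) < e0" .
    hence "dist (\<tau>v a b) (\<tau>v a0 b0) < q" using e0(2) that by auto
    thus ?thesis by (simp add: dist_real_def)
  qed
  have pw: "\<exists>d>0. d \<le> z0 \<and> (\<forall>z. z0 - d \<le> z \<and> z \<le> z0 + d \<longrightarrow> \<bar>z powr (-\<alpha>) - z0 powr (-\<alpha>)\<bar> < c)"
    if z0: "z0 > 0" for z0
  proof -
    have "((\<lambda>z. z powr (-\<alpha>)) \<longlongrightarrow> z0 powr (-\<alpha>)) (at z0)"
      using tendsto_powr[OF tendsto_ident_at tendsto_const, of z0 "-\<alpha>"] z0 by simp
    from LIM_D[OF this c(1)] obtain s where s: "s > 0"
      "\<forall>z. z \<noteq> z0 \<and> norm (z - z0) < s \<longrightarrow> norm (z powr (-\<alpha>) - z0 powr (-\<alpha>)) < c" by blast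
    define d where "d = min s z0 / 2"
    have d: "d > 0" "d \<le> z0" "d < s" using s z0 unfolding d_def by auto
    show ?thesis
    proof (intro exI[of _ d] conjI allI impI d(1) d(2))
      fix z assume z: "z0 - d \<le> z \<and> z \<le> z0 + d"
      show "\<bar>z powr (-\<alpha>) - z0 powr (-\<alpha>)\<bar> < c"
      proof (cases "z = z0")
        case True thus ?thesis using c by simp
      next
        case False
        have "norm (z - z0) < s" using z d by auto
        thus ?thesis using s(2) False by auto
      qed
    qed
  qed
  obtain dx where dx: "dx > 0" "dx \<le> x0" "\<And>z. x0 - dx \<le> z \<Longrightarrow> z \<le> x0 + dx \<Longrightarrow> \<bar>z powr (-\<alpha>) - a0\<bar> < c"
    using pw[OF x0] unfolding a0_def by blast
  obtain dy where dy: "dy > 0" "dy \<le> y0" "\<And>z. y0 - dy \<le> z \<Longrightarrow> z \<le> y0 + dy \<Longrightarrow> \<bar>z powr (-\<alpha>) - b0\<bar> < c"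
    using pw[OF y0] unfolding b0_def by blast
  define x1 where "x1 = x0 - dx/2"
  define x2 where "x2 = x0 + dx/2"
  define y1 where "y1 = y0 - dy/2"
  define y2 where "y2 = y0 + dy/2"
  have xy: "x1 > 0" "y1 > 0" "x1 < x0" "x0 < x2" "y1 < y0" "y0 < y2"
    using dx dy unfolding x1_def x2_def y1_def y2_def by auto
  define U where "U = {x1<..<x2} \<times> {y1<..<y2}"
  have U: "open U" "(x0,y0) \<in> U" unfolding U_def using xy by (auto intro: open_Times)
  have px1: "x1 powr (-\<alpha>) < a0 + c" and px2: "x2 powr (-\<alpha>) > a0 - c"
    using dx(3)[of x1] dx(3)[of x2] dx(1) unfolding x1_def x2_def by auto
  have py1: "y1 powr (-\<alpha>) < b0 + c" and py2: "y2 powr (-\<alpha>) > b0 - c"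
    using dy(3)[of y1] dy(3)[of y2] dy(1) unfolding y1_def y2_def by auto
  define h where "h = 2 * c"
  define a1 where "a1 = a0 + 2 * c"
  define a2 where "a2 = a0 - 2 * c"
  define bb where "bb = b0 - 4 * c"
  define b2 where "b2 = b0 + 2 * c"
  have pos: "h > 0" "a1 > 0" "a2 > 0" "bb > 0" "b2 > 0"
    using c unfolding h_def a1_def a2_def bb_def b2_def by auto
  obtain z1 where z1: "bb < z1" "z1 < bb + h" "(\<tau> a1 (bb+h) - \<tau> a1 bb)/h = \<tau>v a1 z1"
    using tau_mvt[OF TD, of a1 bb h] pos by auto
  have qup: "(\<tau> a1 (bb+h) - \<tau> a1 bb)/h < \<tau>v a0 b0 + 2 * q"
  proof -
    have "\<bar>\<tau>v a1 z1 - \<tau>v a0 b0\<bar> < q"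
      by (rule tv_close) (use z1 pos c in \<open>auto simp: a1_def bb_def h_def\<close>)
    thus ?thesis using z1(3) q by linarith
  qed
  obtain z2 where z2: "b2 < z2" "z2 < b2 + h" "(\<tau> a2 (b2+h) - \<tau> a2 b2)/h = \<tau>v a2 z2"
    using tau_mvt[OF TD, of a2 b2 h] pos by auto
  have qlo: "(\<tau> a2 (b2+h) - \<tau> a2 b2)/h > \<tau>v a0 b0 - 2 * q"
  proof -
    have "\<bar>\<tau>v a2 z2 - \<tau>v a0 b0\<bar> < q"
      by (rule tv_close) (use z2 pos c in \<open>auto simp: a2_def b2_def h_def\<close>)
    thus ?thesis using z2(3) q by linarith
  qed
  define Df where "Df a b s = (C (a * s) ((b+h) * s)/(s powr \<kappa> * l s) - C (a * s) (b * s)/(s powr \<kappa> * l s))/h" for a b s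
  have Dlim: "((\<lambda>t. Df a b (f t)) \<longlongrightarrow> (\<tau> a (b+h) - \<tau> a b)/h) at_top" if "a \<ge> 0" "b \<ge> 0" for a b
  proof -
    have "((\<lambda>s. Df a b s) \<longlongrightarrow> (\<tau> a (b+h) - \<tau> a b)/h) (at_right 0)"
    proof -
      have l1: "((\<lambda>s. C (a * s) ((b+h) * s)/(s powr \<kappa> * l s)) \<longlongrightarrow> \<tau> a (b+h)) (at_right 0)"
        using C_tail[of a "b+h"] that pos by simp
      have l2: "((\<lambda>s. C (a * s) (b * s)/(s powr \<kappa> * l s)) \<longlongrightarrow> \<tau> a b) (at_right 0)"
        using C_tail[of a b] that by simp
      show ?thesis unfolding Df_def
        using tendsto_divide[OF tendsto_diff[OF l1 l2] tendsto_const[of h]] pos by simp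
    qed
    moreover have "filterlim f (at_right 0) at_top"
      using tendsto_imp_filterlim_at_right[OF flim] fpos by simp
    ultimately show ?thesis by (rule filterlim_compose)
  qed
  have E7: "eventually (\<lambda>t. Df a1 bb (f t) < \<tau>v a0 b0 + 2 * q) at_top"
    using order_tendstoD(2)[OF Dlim qup] pos by simp
  have E8: "eventually (\<lambda>t. \<tau>v a0 b0 - 2 * q < Df a2 b2 (f t)) at_top"
    using order_tendstoD(1)[OF Dlim qlo] pos by simp
  have E1: "eventually (\<lambda>t. f (t * x1) / f t < a1) at_top"
    by (rule order_tendstoD(2)[OF fRV[OF xy(1)]]) (use px1 c in \<open>simp add: a1_def\<close>)
  have E2: "eventually (\<lambda>t. a2 < f (t * x2) / f t) at_top"
    by (rule order_tendstoD(1)[OF fRV]) (use px2 c xy in \<open>auto simp add: a2_def\<close>)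
  have E3: "eventually (\<lambda>t. f (t * y1) / f t < b2) at_top"
    by (rule order_tendstoD(2)[OF fRV[OF xy(2)]]) (use py1 c in \<open>simp add: b2_def\<close>)
  have E4: "eventually (\<lambda>t. bb + h < f (t * y2) / f t) at_top"
    by (rule order_tendstoD(1)[OF fRV]) (use py2 c xy in \<open>auto simp add: bb_def h_def\<close>)
  define K where "K = a1 + b2 + h + 1"
  have K: "K > 0" "a1 \<le> K" "a2 \<le> K" "bb + h \<le> K" "b2 + h \<le> K"
    using pos c unfolding K_def a1_def a2_def bb_def b2_def h_def by auto
  have "((\<lambda>t. f t * K) \<longlongrightarrow> 0 * K) at_top" by (intro tendsto_intros flim)
  hence E6: "eventually (\<lambda>t. f t * K < 1) at_top" using order_tendstoD(2) by fastforce
  have E5: "eventually (\<lambda>t::real. t > 0) at_top" by (rule eventually_gt_at_top)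
  have ev: "eventually (\<lambda>t. t > 0 \<and> f t * K < 1 \<and> f (t * x1) / f t < a1 \<and> a2 < f (t * x2) / f t
      \<and> f (t * y1) / f t < b2 \<and> bb + h < f (t * y2) / f t
      \<and> Df a1 bb (f t) < \<tau>v a0 b0 + 2 * q \<and> \<tau>v a0 b0 - 2 * q < Df a2 b2 (f t)) at_top"
    using E1 E2 E3 E4 E5 E6 E7 E8 by (auto simp: eventually_conj_iff)
  show ?thesis
  proof (intro exI[of _ U] conjI U, rule eventually_mono[OF ev], intro allI impI)
    fix t x y
    assume T: "t > 0 \<and> f t * K < 1 \<and> f (t * x1) / f t < a1 \<and> a2 < f (t * x2) / f t
      \<and> f (t * y1) / f t < b2 \<and> bb + h < f (t * y2) / f t
      \<and> Df a1 bb (f t) < \<tau>v a0 b0 + 2 * q \<and> \<tau>v a0 b0 - 2 * q < Df a2 b2 (f t)"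
      and xyU: "(x,y) \<in> U"
    define s where "s = f t"
    have s: "s > 0" using fpos unfolding s_def by simp
    have t: "t > 0" using T by simp
    have x: "x1 < x" "x < x2" and y: "y1 < y" "y < y2" using xyU unfolding U_def by auto
    have sK: "s * K < 1" using T unfolding s_def by simp
    have small: "a1 * s < 1" "a2 * s < 1" "(bb + h) * s < 1" "(b2 + h) * s < 1" "b2 * s < 1"
    proof -
      have "z * s < 1" if "z \<le> K" for z
      proof -
        have "z * s \<le> K * s" by (rule mult_right_mono) (use that s in auto)
        thus ?thesis using sK by (simp add: mult.commute)
      qed
      thus "a1 * s < 1" "a2 * s < 1" "(bb + h) * s < 1" "(b2 + h) * s < 1" "b2 * s < 1"
        using K pos by auto
    qed
    define u where "u = f (x * t)"
    define w where "w = f (y * t)"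
    have fx1: "f (t * x1) < a1 * s" using T s unfolding s_def by (simp add: divide_less_eq)
    have fx2: "a2 * s < f (t * x2)" using T s unfolding s_def by (simp add: less_divide_eq)
    have fy1: "f (t * y1) < b2 * s" using T s unfolding s_def by (simp add: divide_less_eq)
    have fy2: "(bb + h) * s < f (t * y2)" using T s unfolding s_def by (simp add: less_divide_eq)
    have "f (x * t) \<le> f (t * x1)" using fanti[of "t * x1" "x * t"] x t by (simp add: mult.commute)
    hence u1: "u < a1 * s" using fx1 unfolding u_def by linarith
    have "f (t * x2) \<le> f (x * t)" using fanti[of "x * t" "t * x2"] x t by (simp add: mult.commute)
    hence u2: "a2 * s < u" using fx2 unfolding u_def by linarith
    have "f (y * t) \<le> f (t * y1)" using fanti[of "t * y1" "y * t"] y t by (simp add: mult.commute)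
    hence w1: "w < b2 * s" using fy1 unfolding w_def by linarith
    have "f (t * y2) \<le> f (y * t)" using fanti[of "y * t" "t * y2"] y t by (simp add: mult.commute)
    hence w2: "(bb + h) * s < w" using fy2 unfolding w_def by linarith
    have upos: "u > 0" "w > 0" unfolding u_def w_def using fpos by auto
    have den: "s powr (\<kappa> - 1) * l s > 0" using s lpos by simp
    have a1s: "a1 * s \<in> {0..1}" "a2 * s \<in> {0..1}" using small pos s by auto
    have "Cv u w \<le> Cv (a1 * s) w"
      by (rule Cv_mono_u[OF cop CD]) (use upos u1 small w1 in auto)
    also have "\<dots> \<le> Cv (a1 * s) ((bb + h) * s)"
      using monotone_onD[OF Cv_mono[OF a1s(1)], of "(bb + h) * s" w] w2 w1 small pos s upos
      by auto
    finally have up1: "Cv u w / (s powr (\<kappa> - 1) * l s) \<le> Cv (a1 * s) ((bb + h) * s) / (s powr (\<kappa> - 1) * l s)"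
      using den by (simp add: divide_right_mono)
    have up2: "Cv (a1 * s) ((bb + h) * s) / (s powr (\<kappa> - 1) * l s) \<le> Df a1 bb s"
      unfolding Df_def by (rule sandwich(1)[OF CD Cv_mono]) (use s pos small lpos in auto)
    have up: "Cv u w / (s powr (\<kappa> - 1) * l s) < \<tau>v a0 b0 + 2 * q"
      using up1 up2 T unfolding s_def by linarith
    have "Cv (a2 * s) (b2 * s) \<le> Cv (a2 * s) w"
      using monotone_onD[OF Cv_mono[OF a1s(2)], of w "b2 * s"] w1 small pos s upos
      by auto
    also have "Cv (a2 * s) w \<le> Cv u w"
      by (rule Cv_mono_u[OF cop CD]) (use upos u1 u2 small w1 pos s in auto)
    finally have lo1: "Cv (a2 * s) (b2 * s) / (s powr (\<kappa> - 1) * l s) \<le> Cv u w / (s powr (\<kappa> - 1) * l s)"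
      using den by (simp add: divide_right_mono)
    have lo2: "Df a2 b2 s \<le> Cv (a2 * s) (b2 * s) / (s powr (\<kappa> - 1) * l s)"
      unfolding Df_def by (rule sandwich(2)[OF CD Cv_mono]) (use s pos small lpos in auto)
    have lo: "\<tau>v a0 b0 - 2 * q < Cv u w / (s powr (\<kappa> - 1) * l s)"
      using lo1 lo2 T unfolding s_def by linarith
    have "\<bar>\<tau>v (x powr (-\<alpha>)) (y powr (-\<alpha>)) - \<tau>v a0 b0\<bar> < q"
    proof (rule tv_close)
      show "\<bar>x powr (-\<alpha>) - a0\<bar> < 6 * c"
        using dx(3)[of x] x c unfolding x1_def x2_def by auto
      show "\<bar>y powr (-\<alpha>) - b0\<bar> < 6 * c"
        using dy(3)[of y] y c unfolding y1_def y2_def by auto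
    qed auto
    thus "\<bar>Cv (f (x * t)) (f (y * t)) / (f t powr (\<kappa> - 1) * l (f t)) - \<tau>v (x powr (-\<alpha>)) (y powr (-\<alpha>))\<bar> < \<epsilon>"
      using up lo q unfolding u_def w_def s_def by (simp add: abs_less_iff)
  qed
qed

theorem mainTheorem10:
  fixes M :: "'a measure" and X Y :: "'a \<Rightarrow> real"
    and F :: "real \<Rightarrow> real" and \<alpha> :: real
    and C Cu Cv Cuu Cuv Cvu Cvv :: "real \<Rightarrow> real \<Rightarrow> real"
    and \<kappa> :: real and l :: "real \<Rightarrow> real"
    and \<tau> \<tau>u \<tau>v :: "real \<Rightarrow> real \<Rightarrow> real"
    and B :: "(real \<times> real) set"
  (* Assumption A1 *)
  assumes M: "prob_space M"
    and X_rv: "X \<in> borel_measurable M" and Y_rv: "Y \<in> borel_measurable M"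
    and X_nonneg: "AE \<omega> in M. X \<omega> \<ge> 0" and Y_nonneg: "AE \<omega> in M. Y \<omega> \<ge> 0"
    and X_cdf: "\<And>x. measure M {\<omega>\<in>space M. X \<omega> \<le> x} = F x"
    and Y_cdf: "\<And>x. measure M {\<omega>\<in>space M. Y \<omega> \<le> x} = F x"
    and F_cont: "continuous_on UNIV F"
    and \<alpha>_pos: "\<alpha> > 0"
    and F_RV: "regularly_varying (\<lambda>x. 1 - F x) (- \<alpha>)"
    and C_copula: "copula C"
    and C_surv: "\<And>x y. measure M {\<omega>\<in>space M. X \<omega> > x \<and> Y \<omega> > y}
                        = C (1 - F x) (1 - F y)"
  (* Assumption A2 *)
    and C_sym: "\<And>u v. u \<in> {0..1} \<Longrightarrow> v \<in> {0..1} \<Longrightarrow> C u v = C v u"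
    and C_diff: "has_partials_on C Cu Cv ({0..1} \<times> {0..1})"
    and Cu_diff: "has_partials_on Cu Cuu Cuv ({0..1} \<times> {0..1})"
    and Cv_diff: "has_partials_on Cv Cvu Cvv ({0..1} \<times> {0..1})"
    and \<kappa>_range: "1 \<le> \<kappa>" "\<kappa> \<le> 2"
    and l_SV: "slowly_varying_at_0 l"
    and \<tau>_diff: "has_partials_on \<tau> \<tau>u \<tau>v ({0..} \<times> {0..})"
    and \<tau>u_cont: "continuous_on ({0..} \<times> {0..}) (\<lambda>p. \<tau>u (fst p) (snd p))"
    and \<tau>v_cont: "continuous_on ({0..} \<times> {0..}) (\<lambda>p. \<tau>v (fst p) (snd p))"
    and \<tau>_nonzero: "\<exists>u\<ge>0. \<exists>v\<ge>0. \<tau> u v \<noteq> 0"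
    and C_tail: "\<And>u v. u \<ge> 0 \<Longrightarrow> v \<ge> 0 \<Longrightarrow>
        ((\<lambda>t. C (u * t) (v * t) / (t powr \<kappa> * l t)) \<longlongrightarrow> \<tau> u v) (at_right 0)"
    and Cu_mono: "\<And>v. v \<in> {0..1} \<Longrightarrow> antimono_on {0..1} (\<lambda>u. Cu u v)"
    and Cv_mono: "\<And>u. u \<in> {0..1} \<Longrightarrow> antimono_on {0..1} (\<lambda>v. Cv u v)"
  (* compact set *)
    and B_compact: "compact B" and B_sub: "B \<subseteq> {0<..} \<times> {0<..}"
  shows "uniform_limit B
           (\<lambda>t (x, y). Cv (1 - F (x * t)) (1 - F (y * t))
                         / ((1 - F t) powr (\<kappa> - 1) * l (1 - F t)))
           (\<lambda>(x, y). \<tau>v (x powr (- \<alpha>)) (y powr (- \<alpha>)))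
           at_top"
proof (rule uniform_limitI)
  fix \<epsilon> :: real assume eps: "\<epsilon> > 0"
  note FF = F_facts[OF M X_rv X_cdf F_RV]
  have fRV: "\<And>x. x > 0 \<Longrightarrow> ((\<lambda>t. (1 - F (t * x)) / (1 - F t)) \<longlongrightarrow> x powr (-\<alpha>)) at_top"
    using F_RV unfolding regularly_varying_def by auto
  have lpos: "\<And>t. t > 0 \<Longrightarrow> l t > 0" using l_SV unfolding slowly_varying_at_0_def by auto
  define P where "P p U \<longleftrightarrow> open U \<and> p \<in> U \<and> eventually (\<lambda>t. \<forall>x y. (x,y) \<in> U \<longrightarrow>
      \<bar>Cv (1 - F (x * t)) (1 - F (y * t)) / ((1 - F t) powr (\<kappa> - 1) * l (1 - F t))
        - \<tau>v (x powr (-\<alpha>)) (y powr (-\<alpha>))\<bar> < \<epsilon>) at_top" for p U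
  have loc: "\<forall>p\<in>B. \<exists>U. P p U"
  proof
    fix p assume p: "p \<in> B"
    obtain x0 y0 where pe: "p = (x0, y0)" by fastforce
    have xy0: "x0 > 0" "y0 > 0" using p B_sub pe by auto
    show "\<exists>U. P p U" unfolding P_def pe
      by (rule local_bound[where f="\<lambda>x. 1 - F x", OF C_copula C_diff Cv_mono \<tau>_diff \<tau>v_cont C_tail lpos
            FF(1) FF(2) FF(3) fRV xy0 eps])
  qed
  then obtain U where U: "\<forall>p\<in>B. P p (U p)" by (rule bchoice[THEN exE]) blast
  have opn: "\<And>p. p \<in> B \<Longrightarrow> open (U p)" using U unfolding P_def by blast
  have cov: "B \<subseteq> (\<Union>p\<in>B. U p)" using U unfolding P_def by blast
  obtain C' where C': "C' \<subseteq> B" "finite C'" "B \<subseteq> (\<Union>p\<in>C'. U p)"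
    by (rule compactE_image[OF B_compact opn cov]) blast
  have "\<forall>p\<in>C'. eventually (\<lambda>t. \<forall>x y. (x,y) \<in> U p \<longrightarrow>
      \<bar>Cv (1 - F (x * t)) (1 - F (y * t)) / ((1 - F t) powr (\<kappa> - 1) * l (1 - F t))
        - \<tau>v (x powr (-\<alpha>)) (y powr (-\<alpha>))\<bar> < \<epsilon>) at_top"
    using U C'(1) unfolding P_def by blast
  hence ev: "eventually (\<lambda>t. \<forall>p\<in>C'. \<forall>x y. (x,y) \<in> U p \<longrightarrow>
      \<bar>Cv (1 - F (x * t)) (1 - F (y * t)) / ((1 - F t) powr (\<kappa> - 1) * l (1 - F t))
        - \<tau>v (x powr (-\<alpha>)) (y powr (-\<alpha>))\<bar> < \<epsilon>) at_top"
    by (rule eventually_ball_finite[OF C'(2)])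
  show "\<forall>\<^sub>F t in at_top. \<forall>q\<in>B. dist ((\<lambda>t (x, y). Cv (1 - F (x * t)) (1 - F (y * t))
                         / ((1 - F t) powr (\<kappa> - 1) * l (1 - F t))) t q)
          ((\<lambda>(x, y). \<tau>v (x powr (- \<alpha>)) (y powr (- \<alpha>))) q) < \<epsilon>"
  proof (rule eventually_mono[OF ev], intro ballI)
    fix t q
    assume H: "\<forall>p\<in>C'. \<forall>x y. (x,y) \<in> U p \<longrightarrow>
      \<bar>Cv (1 - F (x * t)) (1 - F (y * t)) / ((1 - F t) powr (\<kappa> - 1) * l (1 - F t))
        - \<tau>v (x powr (-\<alpha>)) (y powr (-\<alpha>))\<bar> < \<epsilon>" and q: "q \<in> B"
    obtain p where p: "p \<in> C'" "q \<in> U p" using C'(3) q by blast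
    obtain x y where qe: "q = (x,y)" by fastforce
    show "dist ((\<lambda>t (x, y). Cv (1 - F (x * t)) (1 - F (y * t))
                         / ((1 - F t) powr (\<kappa> - 1) * l (1 - F t))) t q)
          ((\<lambda>(x, y). \<tau>v (x powr (- \<alpha>)) (y powr (- \<alpha>))) q) < \<epsilon>"
      using H p unfolding qe by (simp add: dist_real_def)
  qed
qed

end
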